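(* Let $\hat\alpha\in\{-1,-2,\dots\}$ and let $\mathcal F=(F_1,F_2)$ be a pair of finite sets of positive integers. Then the polynomials $L_n^{\hat\alpha;\mathcal F}$, $n\in\sigma_{\mathcal F}$, are common eigenfunctions of the second order differential operator $D_{\mathcal F}=x\partial^2+h_1(x)\partial+h_0(x)$, $\partial=d/dx$, where $h_1(x)=\hat\alpha+k+1-x-2x\frac{(\Omega^{\hat\alpha}_{\mathcal F})'(x)}{\Omega^{\hat\alpha}_{\mathcal F}(x)}$ and $h_0(x)=-k_1-u_{\mathcal F}+(x-\hat\alpha-k)\frac{(\Omega^{\hat\alpha}_{\mathcal F})'(x)}{\Omega^{\hat\alpha}_{\mathcal F}(x)}+x\frac{(\Omega^{\hat\alpha}_{\mathcal F})''(x)}{\Omega^{\hat\alpha}_{\mathcal F}(x)}$; more precisely $D_{\mathcal F}(L_n^{\hat\alpha;\mathcal F})=-n\,L_n^{\hat\alpha;\mathcal F}$ for $n\in\sigma_{\mathcal F}$.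
   Context: $k_i=|F_i|$, $k=k_1+k_2$. Laguerre: $L_n^\alpha(x)=\sum_{j=0}^n\frac{(-x)^j}{j!}\binom{n+\alpha}{n-j}$. $u_{\mathcal F}=\sum_{f\in F_1}f+\sum_{f\in F_2}f-\binom{k_1+1}{2}-\binom{k_2}{2}$; $\sigma_{\mathcal F}=\{u_{\mathcal F},u_{\mathcal F}+1,\dots\}\setminus\{u_{\mathcal F}+f:f\in F_1\}$. $L_n^{\hat\alpha;\mathcal F}(x)$ is the $(k+1)\times(k+1)$ determinant with first row $\big((L^{\hat\alpha}_{n-u_{\mathcal F}})^{(j-1)}(x)\big)_{j=1}^{k+1}$, then rows $\big((L_f^{\hat\alpha})^{(j-1)}(x)\big)_j$ for $f\in F_1$ (increasing), then rows $\big(L_f^{\hat\alpha+j-1}(-x)\big)_j$ for $f\in F_2$. $\Omega^{\hat\alpha}_{\mathcal F}(x)$ is the $k\times k$ determinant with rows $\big((L_f^{\hat\alpha})^{(j-1)}(x)\big)_{j=1}^k$, $f\in F_1$, followed by rows $\big(L_f^{\hat\alpha+j-1}(-x)\big)_{j=1}^k$, $f\in F_2$. *)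

theory Defs
  imports "Jordan_Normal_Form.Determinant" "HOL-Computational_Algebra.Polynomial"
begin

definition lag :: "nat \<Rightarrow> int \<Rightarrow> real poly" where
  "lag n a = (\<Sum>j\<le>n. monom ((-1)^j / fact j * ((of_int (int n + a) :: real) gchoose (n - j))) j)"

definition uF :: "nat set \<Rightarrow> nat set \<Rightarrow> int" where
  "uF F1 F2 = int (\<Sum>F1) + int (\<Sum>F2) - int ((card F1 + 1) choose 2) - int (card F2 choose 2)"

definition sigmaF :: "nat set \<Rightarrow> nat set \<Rightarrow> int set" where
  "sigmaF F1 F2 = {m. uF F1 F2 \<le> m} - {uF F1 F2 + int f | f. f \<in> F1}"

definition row1 :: "int \<Rightarrow> nat \<Rightarrow> nat \<Rightarrow> real poly" where
  "row1 a f j = (pderiv ^^ j) (lag f a)"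

definition row2 :: "int \<Rightarrow> nat \<Rightarrow> nat \<Rightarrow> real poly" where
  "row2 a f j = pcompose (lag f (a + int j)) [:0, -1:]"

definition OmegaF :: "int \<Rightarrow> nat set \<Rightarrow> nat set \<Rightarrow> real poly" where
  "OmegaF a F1 F2 =
     (let rows = map (row1 a) (sorted_list_of_set F1) @ map (row2 a) (sorted_list_of_set F2);
          k = card F1 + card F2
      in det (mat k k (\<lambda>(i, j). (rows ! i) j)))"

definition LagF :: "int \<Rightarrow> nat set \<Rightarrow> nat set \<Rightarrow> nat \<Rightarrow> real poly" where
  "LagF a F1 F2 n =
     (let rows = (row1 a (nat (int n - uF F1 F2))) #
                 map (row1 a) (sorted_list_of_set F1) @ map (row2 a) (sorted_list_of_set F2);
          k = card F1 + card F2
      in det (mat (k + 1) (k + 1) (\<lambda>(i, j). (rows ! i) j)))"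

end

theory Submission
  imports Defs
begin


definition Dt :: "nat \<Rightarrow> (nat \<Rightarrow> nat \<Rightarrow> 'a::comm_ring_1) \<Rightarrow> 'a" where
  "Dt m C = det (mat m m (\<lambda>(i,j). C j i))"

lemma Dt_def': "Dt m C = (\<Sum>p\<in>{p. p permutes {0..<m}}. signof p * (\<Prod>i=0..<m. C (p i) i))"
proof -
  have "Dt m C = (\<Sum>p\<in>{p. p permutes {0..<m}}. signof p * (\<Prod>i=0..<m. mat m m (\<lambda>(i,j). C j i) $$ (i, p i)))"
    unfolding Dt_def by (rule det_def') auto
  also have "\<dots> = (\<Sum>p\<in>{p. p permutes {0..<m}}. signof p * (\<Prod>i=0..<m. C (p i) i))"
    by (intro sum.cong refl arg_cong2[where f="(*)"] prod.cong) (auto simp: permutes_in_image)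
  finally show ?thesis .
qed

lemma prod_upd:
  fixes m j :: nat
  assumes p: "p permutes {0..<m}" and j: "j < m"
  shows "(\<Prod>i=0..<m. (C(j:=g)) (p i) i) = g (inv_into UNIV p j) * (\<Prod>i\<in>{0..<m}-{inv_into UNIV p j}. C (p i) i)"
proof -
  let ?i0 = "inv_into UNIV p j"
  have pi0: "p ?i0 = j" using permutes_inverses[OF p] by simp
  have i0: "?i0 \<in> {0..<m}" using permutes_in_image[OF permutes_inv[OF p], of j] j by simp
  have "(\<Prod>i=0..<m. (C(j:=g)) (p i) i) = (C(j:=g)) (p ?i0) ?i0 * (\<Prod>i\<in>{0..<m}-{?i0}. (C(j:=g)) (p i) i)"
    using i0 by (simp add: prod.remove)
  also have "(\<Prod>i\<in>{0..<m}-{?i0}. (C(j:=g)) (p i) i) = (\<Prod>i\<in>{0..<m}-{?i0}. C (p i) i)"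
  proof (rule prod.cong[OF refl])
    fix i assume "i \<in> {0..<m}-{?i0}"
    hence ne: "i \<noteq> ?i0" by simp
    show "(C(j:=g)) (p i) i = C (p i) i"
    proof (cases "p i = j")
      case True
      hence "i = ?i0" using permutes_inverses(2)[OF p, of i] by simp
      with ne show ?thesis by simp
    qed simp
  qed
  finally show ?thesis using pi0 by simp
qed

lemma prod_all_split:
  fixes m j :: nat
  assumes p: "p permutes {0..<m}" and j: "j < m"
  shows "(\<Prod>i=0..<m. C (p i) i) = C j (inv_into UNIV p j) * (\<Prod>i\<in>{0..<m}-{inv_into UNIV p j}. C (p i) i)"
  using prod_upd[OF p j, of "C" "C j"] by simp

lemma Dt_upd:
  assumes j: "j < m"
  shows "Dt m (C(j:=g)) = (\<Sum>p\<in>{p. p permutes {0..<m}}. signof p * (g (inv_into UNIV p j) * (\<Prod>i\<in>{0..<m}-{inv_into UNIV p j}. C (p i) i)))"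
  unfolding Dt_def' by (rule sum.cong[OF refl]) (simp add: prod_upd[OF _ j] del: fun_upd_apply)

lemma Dt_col_sum:
  assumes j: "j < m" and S: "finite S"
  shows "Dt m (C(j := (\<lambda>i. \<Sum>l\<in>S. h l i))) = (\<Sum>l\<in>S. Dt m (C(j := h l)))"
  unfolding Dt_upd[OF j]
  by (subst sum.swap) (simp add: sum_distrib_left sum_distrib_right)

lemma Dt_col_smult:
  assumes j: "j < m"
  shows "Dt m (C(j := (\<lambda>i. a * h i))) = a * Dt m (C(j := h))"
  unfolding Dt_upd[OF j] by (simp add: sum_distrib_left algebra_simps)

lemma Dt_col_add:
  assumes j: "j < m"
  shows "Dt m (C(j := (\<lambda>i. u i + v i))) = Dt m (C(j := u)) + Dt m (C(j := v))"
  unfolding Dt_upd[OF j] by (simp add: sum.distrib algebra_simps)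

lemma Dt_col_diff:
  assumes j: "j < m"
  shows "Dt m (C(j := (\<lambda>i. u i - v i))) = Dt m (C(j := u)) - Dt m (C(j := v))"
  unfolding Dt_upd[OF j] by (simp add: sum_subtractf algebra_simps)

lemma Dt_cong:
  assumes "\<And>j i. j < m \<Longrightarrow> i < m \<Longrightarrow> C j i = C' j i"
  shows "Dt m C = Dt m C'"
  unfolding Dt_def by (rule arg_cong[where f=det]) (auto intro!: eq_matI assms)

lemma Dt_trace:
  "(\<Sum>j<m. Dt m (C(j := (\<lambda>i. w i * C j i)))) = (\<Sum>i<m. w i) * Dt m C"
proof -
  have "(\<Sum>j<m. Dt m (C(j := (\<lambda>i. w i * C j i)))) =
     (\<Sum>j<m. \<Sum>p\<in>{p. p permutes {0..<m}}. signof p * (w (inv_into UNIV p j) * (\<Prod>i=0..<m. C (p i) i)))"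
  proof (rule sum.cong[OF refl])
    fix j assume j: "j \<in> {..<m}"
    show "Dt m (C(j := (\<lambda>i. w i * C j i))) = (\<Sum>p\<in>{p. p permutes {0..<m}}. signof p * (w (inv_into UNIV p j) * (\<Prod>i=0..<m. C (p i) i)))"
      using j by (auto simp: Dt_upd prod_all_split[of _ m j C] intro!: sum.cong)
  qed
  also have "\<dots> = (\<Sum>p\<in>{p. p permutes {0..<m}}. signof p * (\<Prod>i=0..<m. C (p i) i) * (\<Sum>j<m. w (inv_into UNIV p j)))"
    by (subst sum.swap) (auto simp: sum_distrib_left sum_distrib_right ac_simps intro!: sum.cong)
  also have "\<dots> = (\<Sum>p\<in>{p. p permutes {0..<m}}. signof p * (\<Prod>i=0..<m. C (p i) i) * (\<Sum>i<m. w i))"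
  proof (rule sum.cong[OF refl])
    fix p assume "p \<in> {p. p permutes {0..<m}}"
    hence p: "p permutes {..<m}" by (simp add: atLeast0LessThan)
    have "(\<Sum>j<m. w (inv_into UNIV p j)) = (\<Sum>i<m. w i)"
      using sum.permute[OF permutes_inv[OF p], of w] by (simp add: comp_def)
    thus "signof p * (\<Prod>i=0..<m. C (p i) i) * (\<Sum>j<m. w (inv_into UNIV p j)) = signof p * (\<Prod>i=0..<m. C (p i) i) * (\<Sum>i<m. w i)" by simp
  qed
  also have "\<dots> = (\<Sum>i<m. w i) * Dt m C" unfolding Dt_def'
    by (simp add: sum_distrib_left sum_distrib_right ac_simps)
  finally show ?thesis .
qed

lemma Dt_dup:
  assumes "j < m" "j' < m" "j \<noteq> j'" "\<And>i. i < m \<Longrightarrow> C j i = C j' i"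
  shows "Dt m C = 0"
  unfolding Dt_def
  by (rule det_identical_columns[of _ m j j']) (use assms in \<open>auto intro!: eq_vecI\<close>)

lemma Dt_swap:
  assumes "j < m" "j' < m" "j \<noteq> j'"
  shows "Dt m (C(j := C j', j' := C j)) = - Dt m C"
proof -
  have "Dt m (C(j := C j', j' := C j)) = det (swapcols j j' (mat m m (\<lambda>(i,j). C j i)))"
    unfolding Dt_def using assms by (intro arg_cong[where f=det] eq_matI) (auto simp: mat_swapcols_def)
  also have "\<dots> = - Dt m C" unfolding Dt_def by (rule det_swapcols) (use assms in auto)
  finally show ?thesis .
qed

lemma pderiv_sum: "pderiv (sum f A) = (\<Sum>x\<in>A. pderiv (f x))"
  by (induct A rule: infinite_finite_induct) (auto simp: pderiv_add)

lemma Dt_pderiv: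
  fixes C :: "nat \<Rightarrow> nat \<Rightarrow> real poly"
  shows "pderiv (Dt m C) = (\<Sum>j<m. Dt m (C(j := (\<lambda>i. pderiv (C j i)))))"
proof -
  have sg: "pderiv (signof p :: real poly) = 0" for p by (simp add: sign_def pderiv_minus)
  have "pderiv (Dt m C) = (\<Sum>p\<in>{p. p permutes {0..<m}}. signof p * (\<Sum>i0\<in>{0..<m}. (\<Prod>i\<in>{0..<m}-{i0}. C (p i) i) * pderiv (C (p i0) i0)))"
    unfolding Dt_def' by (simp add: pderiv_sum pderiv_mult sg pderiv_prod)
  also have "\<dots> = (\<Sum>p\<in>{p. p permutes {0..<m}}. signof p * (\<Sum>j<m. (\<Prod>i\<in>{0..<m}-{inv_into UNIV p j}. C (p i) i) * pderiv (C j (inv_into UNIV p j))))"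
  proof (rule sum.cong[OF refl])
    fix p assume "p \<in> {p. p permutes {0..<m}}"
    hence p: "p permutes {0..<m}" by simp
    have "(\<Sum>i0\<in>{0..<m}. (\<Prod>i\<in>{0..<m}-{i0}. C (p i) i) * pderiv (C (p i0) i0))
        = (\<Sum>j<m. (\<Prod>i\<in>{0..<m}-{inv_into UNIV p j}. C (p i) i) * pderiv (C j (inv_into UNIV p j)))"
    proof (rule sum.reindex_bij_witness[where i="inv_into UNIV p" and j=p])
      fix a assume "a \<in> {..<m}" thus "p (inv_into UNIV p a) = a" using permutes_inverses[OF p] by simp
    next
      fix a assume "a \<in> {..<m}" thus "inv_into UNIV p a \<in> {0..<m}"
        using permutes_in_image[OF permutes_inv[OF p], of a] by simp
    next
      fix a assume "a \<in> {0..<m}" thus "inv_into UNIV p (p a) = a" using permutes_inverses[OF p] by simp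
    next
      fix a assume "a \<in> {0..<m}" thus "p a \<in> {..<m}"
        using permutes_in_image[OF p, of a] by simp
    next
      fix a assume "a \<in> {0..<m}"
      thus "(\<Prod>i\<in>{0..<m}-{inv_into UNIV p (p a)}. C (p i) i) * pderiv (C (p a) (inv_into UNIV p (p a))) =
            (\<Prod>i\<in>{0..<m}-{a}. C (p i) i) * pderiv (C (p a) a)"
        using permutes_inverses[OF p] by simp
    qed
    thus "signof p * (\<Sum>i0\<in>{0..<m}. (\<Prod>i\<in>{0..<m}-{i0}. C (p i) i) * pderiv (C (p i0) i0)) =
          signof p * (\<Sum>j<m. (\<Prod>i\<in>{0..<m}-{inv_into UNIV p j}. C (p i) i) * pderiv (C j (inv_into UNIV p j)))" by simp
  qed
  also have "\<dots> = (\<Sum>p\<in>{p. p permutes {0..<m}}. \<Sum>j<m. signof p * (pderiv (C j (inv_into UNIV p j)) * (\<Prod>i\<in>{0..<m}-{inv_into UNIV p j}. C (p i) i)))"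
    by (simp add: sum_distrib_left ac_simps)
  also have "\<dots> = (\<Sum>j<m. \<Sum>p\<in>{p. p permutes {0..<m}}. signof p * (pderiv (C j (inv_into UNIV p j)) * (\<Prod>i\<in>{0..<m}-{inv_into UNIV p j}. C (p i) i)))"
    by (rule sum.swap)
  also have "\<dots> = (\<Sum>j<m. Dt m (C(j := (\<lambda>i. pderiv (C j i)))))"
    by (rule sum.cong[OF refl]) (simp add: Dt_upd)
  finally show ?thesis .
qed



lemma Dt_laplace_dup:
  fixes C :: "nat \<Rightarrow> nat \<Rightarrow> 'a::comm_ring_1"
  assumes r: "r < n"
  shows "(\<Sum>j<Suc n. (-1)^j * C j r * Dt n (\<lambda>j' i. C (if j' < j then j' else Suc j') i)) = 0"
proof -
  define A where "A = mat (Suc n) (Suc n) (\<lambda>(i,j). C j (if i = 0 then r else i - 1))"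
  have A: "A \<in> carrier_mat (Suc n) (Suc n)" unfolding A_def by simp
  have "det A = 0"
    by (rule det_identical_rows[OF A, of 0 "Suc r"]) (use r in \<open>auto simp: A_def intro!: eq_vecI\<close>)
  moreover have "det A = (\<Sum>j<Suc n. A $$ (0,j) * cofactor A 0 j)"
    by (rule laplace_expansion_row[OF A]) simp
  moreover have "A $$ (0,j) * cofactor A 0 j = (-1)^j * C j r * Dt n (\<lambda>j' i. C (if j' < j then j' else Suc j') i)"
    if j: "j < Suc n" for j
  proof -
    have "mat_delete A 0 j = mat n n (\<lambda>(i,j'). C (if j' < j then j' else Suc j') i)"
      unfolding mat_delete_def A_def by (rule eq_matI) auto
    thus ?thesis unfolding cofactor_def Dt_def using j by (simp add: A_def)
  qed
  ultimately show ?thesis by simp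
qed

lemma pluecker3:
  fixes R :: "nat \<Rightarrow> nat \<Rightarrow> 'a::comm_ring_1"
  assumes k: "k = Suc k'"
  defines "OB \<equiv> \<lambda>cs. Dt k (\<lambda>j i. R (Suc i) (cs j))"
  defines "LM \<equiv> \<lambda>cs. Dt (Suc k) (\<lambda>j i. R i (cs j))"
  shows "OB id * LM (id(k' := k, k := Suc k)) - OB (id(k' := k)) * LM (id(k := Suc k))
         + OB (id(k' := Suc k)) * LM id = 0"
proof -
  define a where "a = (\<lambda>j. (-1)^j * LM (\<lambda>j'. if j' < j then j' else Suc j') :: 'a)"
  have vec: "(\<Sum>j<Suc (Suc k). a j * R r j) = 0" if r: "r < Suc k" for r
  proof -
    have "(\<Sum>j<Suc (Suc k). (-1)^j * R r j * Dt (Suc k) (\<lambda>j' i. R i (if j' < j then j' else Suc j'))) = 0"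
      using Dt_laplace_dup[of r "Suc k" "\<lambda>j i. R i j"] r by simp
    thus ?thesis unfolding a_def LM_def by (simp add: ac_simps)
  qed
  define B where "B = (\<lambda>j i. R (Suc i) j)"
  define psi where "psi = (\<lambda>v. Dt k (B(k' := (\<lambda>i. v (Suc i)))))"
  have k'k: "k' < k" using k by simp
  have "psi (\<lambda>r. \<Sum>j<Suc (Suc k). a j * R r j) = psi (\<lambda>r. 0 * R r 0)"
    unfolding psi_def by (rule Dt_cong) (use vec in auto)
  also have "\<dots> = 0" unfolding psi_def using Dt_col_smult[OF k'k, of B 0] by simp
  finally have z: "psi (\<lambda>r. \<Sum>j<Suc (Suc k). a j * R r j) = 0" .
  have lin: "psi (\<lambda>r. \<Sum>j<Suc (Suc k). a j * R r j) = (\<Sum>j<Suc (Suc k). a j * psi (\<lambda>r. R r j))"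
    unfolding psi_def
    by (subst Dt_col_sum[OF k'k]) (auto intro!: sum.cong simp: Dt_col_smult[OF k'k])
  have p0: "psi (\<lambda>r. R r j) = 0" if "j < k'" for j
    unfolding psi_def by (rule Dt_dup[of j k k']) (use that k in \<open>auto simp: B_def\<close>)
  have p1: "psi (\<lambda>r. R r k') = OB id"
    unfolding psi_def OB_def by (rule Dt_cong) (auto simp: B_def)
  have p2: "psi (\<lambda>r. R r k) = OB (id(k' := k))"
    unfolding psi_def OB_def by (rule Dt_cong) (auto simp: B_def)
  have p3: "psi (\<lambda>r. R r (Suc k)) = OB (id(k' := Suc k))"
    unfolding psi_def OB_def by (rule Dt_cong) (auto simp: B_def)
  have l1: "LM (\<lambda>j'. if j' < k' then j' else Suc j') = LM (id(k' := k, k := Suc k))"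
    unfolding LM_def by (rule Dt_cong) (auto simp: k)
  have l2: "LM (\<lambda>j'. if j' < k then j' else Suc j') = LM (id(k := Suc k))"
    unfolding LM_def by (rule Dt_cong) auto
  have l3: "LM (\<lambda>j'. if j' < Suc k then j' else Suc j') = LM id"
    unfolding LM_def by (rule Dt_cong) auto
  have "(\<Sum>j<Suc (Suc k). a j * psi (\<lambda>r. R r j)) = (\<Sum>j<k'. a j * psi (\<lambda>r. R r j))
      + a k' * psi (\<lambda>r. R r k') + a k * psi (\<lambda>r. R r k) + a (Suc k) * psi (\<lambda>r. R r (Suc k))"
    by (simp add: k)
  also have "(\<Sum>j<k'. a j * psi (\<lambda>r. R r j)) = 0" by (simp add: p0)
  finally have "a k' * OB id + a k * OB (id(k' := k)) + a (Suc k) * OB (id(k' := Suc k)) = 0"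
    using z lin p1 p2 p3 by simp
  hence "(-1)^k' * (OB id * LM (id(k' := k, k := Suc k)) - OB (id(k' := k)) * LM (id(k := Suc k))
         + OB (id(k' := Suc k)) * LM id) = 0"
    unfolding a_def l1 l2 l3 by (simp add: k algebra_simps)
  hence "(-1)^k' * ((-1)^k' * (OB id * LM (id(k' := k, k := Suc k)) - OB (id(k' := k)) * LM (id(k := Suc k))
         + OB (id(k' := Suc k)) * LM id)) = 0" by simp
  thus ?thesis by (simp only: mult.assoc[symmetric] minus_one_mult_self mult_1)
qed



locale lrows =
  fixes R :: "nat \<Rightarrow> nat \<Rightarrow> real poly" and c lam :: "nat \<Rightarrow> real poly" and al :: real and m :: nat
  assumes hD: "\<And>i s. i < m \<Longrightarrow> pderiv (R i s) = R i (Suc s) - c i * R i s"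
  and hE: "\<And>i s. i < m \<Longrightarrow> lam i * R i s = of_nat s * R i s - [:al + of_nat s + 1, -1:] * R i (Suc s)
                   - [:0,1:] * R i (Suc (Suc s))"
begin

definition DC :: "(nat \<Rightarrow> nat) \<Rightarrow> real poly" where
  "DC cs = Dt m (\<lambda>j i. R i (cs j))"

lemma DC_upd: "(\<lambda>j i. R i (cs j))(j := (\<lambda>i. R i s)) = (\<lambda>j' i. R i ((cs(j := s)) j'))"
  by auto

lemma DC_dup: "j < m \<Longrightarrow> j' < m \<Longrightarrow> j \<noteq> j' \<Longrightarrow> cs j = cs j' \<Longrightarrow> DC cs = 0"
  unfolding DC_def by (rule Dt_dup[of j m j']) auto

lemma DC_swap: "j < m \<Longrightarrow> j' < m \<Longrightarrow> j \<noteq> j' \<Longrightarrow> DC (cs(j := cs j', j' := cs j)) = - DC cs"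
proof -
  assume a: "j < m" "j' < m" "j \<noteq> j'"
  have "DC (cs(j := cs j', j' := cs j)) = Dt m ((\<lambda>j i. R i (cs j))(j := (\<lambda>j i. R i (cs j)) j', j' := (\<lambda>j i. R i (cs j)) j))"
    unfolding DC_def by (rule Dt_cong) auto
  also have "\<dots> = - DC cs" unfolding DC_def by (rule Dt_swap) (use a in auto)
  finally show ?thesis .
qed

lemma DC_cong: "(\<And>j. j < m \<Longrightarrow> cs j = cs' j) \<Longrightarrow> DC cs = DC cs'"
  unfolding DC_def by (rule Dt_cong) auto

lemma DC_deriv: "pderiv (DC cs) = (\<Sum>j<m. DC (cs(j := Suc (cs j)))) - (\<Sum>i<m. c i) * DC cs"
proof -
  let ?C = "\<lambda>j i. R i (cs j)"
  have "pderiv (DC cs) = (\<Sum>j<m. Dt m (?C(j := (\<lambda>i. pderiv (?C j i)))))"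
    unfolding DC_def by (rule Dt_pderiv)
  also have "\<dots> = (\<Sum>j<m. Dt m (?C(j := (\<lambda>i. R i (Suc (cs j))))) - Dt m (?C(j := (\<lambda>i. c i * ?C j i))))"
  proof (rule sum.cong[OF refl])
    fix j assume j: "j \<in> {..<m}"
    have "Dt m (?C(j := (\<lambda>i. pderiv (?C j i)))) = Dt m (?C(j := (\<lambda>i. R i (Suc (cs j)) - c i * ?C j i)))"
      by (rule Dt_cong) (auto simp: hD)
    also have "\<dots> = Dt m (?C(j := (\<lambda>i. R i (Suc (cs j))))) - Dt m (?C(j := (\<lambda>i. c i * ?C j i)))"
      using j by (intro Dt_col_diff) auto
    finally show "Dt m (?C(j := (\<lambda>i. pderiv (?C j i)))) = Dt m (?C(j := (\<lambda>i. R i (Suc (cs j))))) - Dt m (?C(j := (\<lambda>i. c i * ?C j i)))" .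
  qed
  also have "\<dots> = (\<Sum>j<m. DC (cs(j := Suc (cs j)))) - (\<Sum>i<m. c i) * DC cs"
    unfolding sum_subtractf Dt_trace DC_def DC_upd ..
  finally show ?thesis .
qed

lemma DC_trace: "(\<Sum>i<m. lam i) * DC cs = (\<Sum>j<m. of_nat (cs j) * DC cs
      - [:al + of_nat (cs j) + 1, -1:] * DC (cs(j := Suc (cs j))) - [:0,1:] * DC (cs(j := Suc (Suc (cs j)))))"
proof -
  let ?C = "\<lambda>j i. R i (cs j)"
  have "(\<Sum>i<m. lam i) * DC cs = (\<Sum>j<m. Dt m (?C(j := (\<lambda>i. lam i * ?C j i))))"
    unfolding DC_def Dt_trace ..
  also have "\<dots> = (\<Sum>j<m. of_nat (cs j) * DC cs
      - [:al + of_nat (cs j) + 1, -1:] * DC (cs(j := Suc (cs j))) - [:0,1:] * DC (cs(j := Suc (Suc (cs j)))))"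
  proof (rule sum.cong[OF refl])
    fix j assume j: "j \<in> {..<m}"
    hence j: "j < m" by simp
    have "Dt m (?C(j := (\<lambda>i. lam i * ?C j i))) = Dt m (?C(j := (\<lambda>i. (of_nat (cs j) * R i (cs j)
       - [:al + of_nat (cs j) + 1, -1:] * R i (Suc (cs j))) - [:0,1:] * R i (Suc (Suc (cs j))))))"
      by (rule Dt_cong) (auto simp: hE)
    also have "\<dots> = of_nat (cs j) * Dt m (?C(j := (\<lambda>i. R i (cs j))))
       - [:al + of_nat (cs j) + 1, -1:] * Dt m (?C(j := (\<lambda>i. R i (Suc (cs j)))))
       - [:0,1:] * Dt m (?C(j := (\<lambda>i. R i (Suc (Suc (cs j))))))"
      by (simp only: Dt_col_diff[OF j] Dt_col_smult[OF j])
    also have "\<dots> = of_nat (cs j) * DC cs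
      - [:al + of_nat (cs j) + 1, -1:] * DC (cs(j := Suc (cs j))) - [:0,1:] * DC (cs(j := Suc (Suc (cs j))))"
      unfolding DC_def DC_upd by simp
    finally show "Dt m (?C(j := (\<lambda>i. lam i * ?C j i))) = of_nat (cs j) * DC cs
      - [:al + of_nat (cs j) + 1, -1:] * DC (cs(j := Suc (cs j))) - [:0,1:] * DC (cs(j := Suc (Suc (cs j))))" .
  qed
  finally show ?thesis .
qed

end



context lrows begin

definition "Bt m' = (if m' = 0 then 0 else DC (id(m' - 1 := m', m' := Suc m')))"

lemma DC_d0: assumes m: "m = Suc m'"
  shows "pderiv (DC id) = DC (id(m' := m)) - (\<Sum>i<m. c i) * DC id"
proof -
  have "(\<Sum>j<m. DC (id(j := Suc (id j)))) = (\<Sum>j<m'. DC (id(j := Suc j))) + DC (id(m' := m))"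
    by (simp add: m)
  also have "(\<Sum>j<m'. DC (id(j := Suc j))) = 0"
  proof (rule sum.neutral, rule ballI)
    fix j assume "j \<in> {..<m'}"
    thus "DC (id(j := Suc j)) = 0" by (intro DC_dup[of j "Suc j"]) (use m in auto)
  qed
  finally have eq: "(\<Sum>j<m. DC (id(j := Suc (id j)))) = DC (id(m' := m))" by (simp only: add_0_left)
  show ?thesis by (simp only: DC_deriv eq)
qed

lemma DC_d1: assumes m: "m = Suc m'"
  shows "pderiv (DC (id(m' := m))) = Bt m' + DC (id(m' := Suc m)) - (\<Sum>i<m. c i) * DC (id(m' := m))"
proof (cases m')
  case 0
  have "(\<Sum>j<m. DC ((id(m' := m))(j := Suc ((id(m' := m)) j)))) = DC (id(m' := Suc m))"
    using 0 m by simp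
  thus ?thesis unfolding DC_deriv Bt_def using 0 by simp
next
  case (Suc m'')
  let ?A = "id(m' := m)"
  have "(\<Sum>j<m. DC (?A(j := Suc (?A j)))) = (\<Sum>j<m''. DC (?A(j := Suc (?A j)))) +
      DC (?A(m'' := Suc (?A m''))) + DC (?A(m' := Suc (?A m')))"
    by (simp add: m Suc)
  also have "(\<Sum>j<m''. DC (?A(j := Suc (?A j)))) = 0"
  proof (rule sum.neutral, rule ballI)
    fix j assume "j \<in> {..<m''}"
    thus "DC (?A(j := Suc (?A j))) = 0" by (intro DC_dup[of j "Suc j"]) (use m Suc in auto)
  qed
  also have "DC (?A(m'' := Suc (?A m''))) = Bt m'"
    unfolding Bt_def using Suc m by (simp add: fun_upd_twist)
  also have "DC (?A(m' := Suc (?A m'))) = DC (id(m' := Suc m))" by simp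
  finally have eq: "(\<Sum>j<m. DC (?A(j := Suc (?A j)))) = Bt m' + DC (id(m' := Suc m))" by (simp only: add_0_left)
  show ?thesis by (simp only: DC_deriv eq)
qed

lemma DC_t0: assumes m: "m = Suc m'"
  shows "(\<Sum>i<m. lam i) * DC id = of_nat (\<Sum>j<m. j) * DC id - [:al + of_nat m, -1:] * DC (id(m' := m))
     + [:0,1:] * Bt m' - [:0,1:] * DC (id(m' := Suc m))"
proof -
  have s1: "(\<Sum>j<m. of_nat (id j) * DC id) = of_nat (\<Sum>j<m. j) * DC id"
    by (simp add: sum_distrib_right)
  have s2: "(\<Sum>j<m. [:al + of_nat (id j) + 1, -1:] * DC (id(j := Suc (id j)))) = [:al + of_nat m, -1:] * DC (id(m' := m))"
  proof -
    have "(\<Sum>j<m. [:al + of_nat (id j) + 1, -1:] * DC (id(j := Suc (id j)))) =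
        (\<Sum>j<m'. [:al + of_nat j + 1, -1:] * DC (id(j := Suc j))) + [:al + of_nat m' + 1, -1:] * DC (id(m' := m))"
      by (simp add: m)
    also have "(\<Sum>j<m'. [:al + of_nat j + 1, -1:] * DC (id(j := Suc j))) = 0"
    proof (rule sum.neutral, rule ballI)
      fix j assume "j \<in> {..<m'}"
      have "DC (id(j := Suc j)) = 0" by (intro DC_dup[of j "Suc j"]) (use m \<open>j \<in> {..<m'}\<close> in auto)
      thus "[:al + of_nat j + 1, -1:] * DC (id(j := Suc j)) = 0" by simp
    qed
    also have "[:al + of_nat m' + 1, -1:] = [:al + of_nat m, -1:]" using m by simp
    finally show ?thesis by (simp only: add_0_left)
  qed
  have s3: "(\<Sum>j<m. [:0,1:] * DC (id(j := Suc (Suc (id j))))) = [:0,1:] * DC (id(m' := Suc m)) - [:0,1:] * Bt m'"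
  proof (cases m')
    case 0
    have "Bt m' = 0" by (simp add: Bt_def 0)
    thus ?thesis using 0 m by simp
  next
    case (Suc m'')
    have "(\<Sum>j<m. [:0,1:] * DC (id(j := Suc (Suc (id j))))) = (\<Sum>j<m''. [:0,1:] * DC (id(j := Suc (Suc j))))
       + [:0,1:] * DC (id(m'' := Suc (Suc m''))) + [:0,1:] * DC (id(m' := Suc (Suc m')))"
      by (simp add: m Suc)
    also have "(\<Sum>j<m''. [:0,1:] * DC (id(j := Suc (Suc j)))) = 0"
    proof (rule sum.neutral, rule ballI)
      fix j assume "j \<in> {..<m''}"
      have "DC (id(j := Suc (Suc j))) = 0" by (intro DC_dup[of j "Suc (Suc j)"]) (use m Suc \<open>j \<in> {..<m''}\<close> in auto)
      thus "[:0,1:] * DC (id(j := Suc (Suc j))) = 0" by simp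
    qed
    also have "DC (id(m'' := Suc (Suc m''))) = - Bt m'"
    proof -
      let ?B = "id(m'' := m', m' := Suc m')"
      have "DC (id(m'' := Suc (Suc m''))) = DC (?B(m'' := ?B m', m' := ?B m''))"
        by (rule DC_cong) (auto simp: Suc)
      also have "\<dots> = - DC ?B" by (rule DC_swap) (auto simp: m Suc)
      finally show ?thesis unfolding Bt_def using Suc m by simp
    qed
    finally have eq: "(\<Sum>j<m. [:0,1:] * DC (id(j := Suc (Suc (id j))))) = 0 + [:0,1:] * - Bt m' + [:0,1:] * DC (id(m' := Suc (Suc m')))" .
    have e: "Suc (Suc m') = Suc m" using m by simp
    show ?thesis unfolding eq e by (simp add: algebra_simps)
  qed
  show ?thesis unfolding DC_trace sum_subtractf s1 s2 s3 by (simp add: algebra_simps)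
qed

end



lemma pCons_lin: "[:a, -1:] = [:a:] - [:0, 1::real:]"
  by (simp add: poly_eq_iff coeff_pCons split: nat.split)

lemma pCons_lin2: "[:al + of_nat n, -1:] = [:al:] + of_nat n - [:0, 1::real:]"
  by (simp add: poly_eq_iff coeff_pCons of_nat_poly split: nat.split)

lemma core:
  fixes R :: "nat \<Rightarrow> nat \<Rightarrow> real poly" and c lam :: "nat \<Rightarrow> real poly" and al :: real and k k' :: nat
  assumes lr: "lrows R c lam al (Suc k)" and k: "k = Suc k'" and c0: "c 0 = 0" and cd: "\<And>i. pderiv (c i) = 0"
  defines "L \<equiv> lrows.DC R (Suc k) id" and "Om \<equiv> lrows.DC (\<lambda>i. R (Suc i)) k id"
  defines "X \<equiv> [:0,1::real:]" and "cs \<equiv> (\<Sum>i<Suc k. c i)"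
  shows "X * pderiv (pderiv L) * Om + ([:al:] + of_nat k + 1 - X) * pderiv L * Om - 2 * X * pderiv Om * pderiv L
     + (lam 0 - of_nat k + cs) * L * Om + (X - [:al:] - of_nat k) * pderiv Om * L + X * pderiv (pderiv Om) * L = 0"
proof -
  interpret M: lrows R c lam al "Suc k" by (rule lr)
  interpret B: lrows "\<lambda>i. R (Suc i)" "\<lambda>i. c (Suc i)" "\<lambda>i. lam (Suc i)" al k
    by unfold_locales (rule M.hD M.hE; simp)+
  have csB: "(\<Sum>i<k. c (Suc i)) = cs" using sum.lessThan_Suc_shift[of c k] c0 unfolding cs_def by simp
  have lamM: "(\<Sum>i<Suc k. lam i) = lam 0 + (\<Sum>i<k. lam (Suc i))" by (rule sum.lessThan_Suc_shift)
  have dcs: "pderiv cs = 0" unfolding cs_def pderiv_sum cd by simp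
  define La where "La = M.DC (id(k := Suc k))"
  define Lb where "Lb = M.DC (id(k' := k, k := Suc k))"
  define Lc where "Lc = M.DC (id(k := Suc (Suc k)))"
  define Oa where "Oa = B.DC (id(k' := k))"
  define Ob where "Ob = B.Bt k'"
  define Oc where "Oc = B.DC (id(k' := Suc k))"
  have MBt: "M.Bt k = Lb" unfolding M.Bt_def Lb_def using k by simp
  have dL: "pderiv L = La - cs * L" unfolding L_def La_def cs_def by (rule M.DC_d0) simp
  have dLa: "pderiv La = Lb + Lc - cs * La" unfolding La_def cs_def Lc_def MBt[symmetric] by (rule M.DC_d1) simp
  have tL: "(lam 0 + (\<Sum>i<k. lam (Suc i))) * L = of_nat (\<Sum>j<Suc k. j) * L - ([:al:] + of_nat k + 1 - X) * La + X * Lb - X * Lc"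
    using M.DC_t0[of k] unfolding L_def La_def Lc_def lamM MBt X_def pCons_lin2 by simp
  have dO: "pderiv Om = Oa - cs * Om" unfolding Om_def Oa_def csB[symmetric] by (rule B.DC_d0) (simp add: k)
  have dOa: "pderiv Oa = Ob + Oc - cs * Oa" unfolding Oa_def Ob_def Oc_def csB[symmetric]
    by (rule B.DC_d1) (simp add: k)
  have tO: "(\<Sum>i<k. lam (Suc i)) * Om = of_nat (\<Sum>j<k. j) * Om - ([:al:] + of_nat k - X) * Oa + X * Ob - X * Oc"
    using B.DC_t0[of k'] k unfolding Om_def Oa_def Ob_def Oc_def X_def pCons_lin2 by simp
  have pl: "Om * Lb - Oa * La + Oc * L = 0"
    using pluecker3[OF k, of R] unfolding Om_def Lb_def Oa_def La_def Oc_def L_def M.DC_def B.DC_def by simp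
  have N: "(of_nat (\<Sum>j<Suc k. j) :: real poly) = of_nat (\<Sum>j<k. j) + of_nat k" by simp
  have ddL: "pderiv (pderiv L) = Lb + Lc - cs * La - cs * (La - cs * L)"
    by (simp add: dL dLa pderiv_diff pderiv_mult dcs)
  have ddO: "pderiv (pderiv Om) = Ob + Oc - cs * Oa - cs * (Oa - cs * Om)"
    by (simp add: dO dOa pderiv_diff pderiv_mult dcs)
  define TL where "TL = (lam 0 + (\<Sum>i<k. lam (Suc i))) * L - (of_nat (\<Sum>j<Suc k. j) * L - ([:al:] + of_nat k + 1 - X) * La + X * Lb - X * Lc)"
  define TO where "TO = (\<Sum>i<k. lam (Suc i)) * Om - (of_nat (\<Sum>j<k. j) * Om - ([:al:] + of_nat k - X) * Oa + X * Ob - X * Oc)"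
  define PL where "PL = Om * Lb - Oa * La + Oc * L"
  have "X * pderiv (pderiv L) * Om + ([:al:] + of_nat k + 1 - X) * pderiv L * Om - 2 * X * pderiv Om * pderiv L
     + (lam 0 - of_nat k + cs) * L * Om + (X - [:al:] - of_nat k) * pderiv Om * L + X * pderiv (pderiv Om) * L
     = Om * TL + 2 * X * PL - L * TO"
    unfolding ddL ddO unfolding dL dO TL_def TO_def PL_def N by (simp add: algebra_simps)
  also have "\<dots> = 0" unfolding TL_def TO_def PL_def using tL tO pl by simp
  finally show ?thesis .
qed



lemma coeff_lag: "coeff (lag f b) j = (if j \<le> f then (-1)^j / fact j * ((of_int (int f + b) :: real) gchoose (f - j)) else 0)"
  unfolding lag_def by (simp add: coeff_sum coeff_monom)

lemma gch_step: "of_nat (Suc t) * ((N::real) gchoose Suc t) = (N - of_nat t) * (N gchoose t)"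
  using gbinomial_mult_1[of N t] by (simp add: algebra_simps)

lemma div_cancel_aux: "(a::real) \<noteq> 0 \<Longrightarrow> a * (y / (a * b)) = y / b"
  by (cases "b = 0") (simp_all add: field_simps)

lemma fact_div: "(of_nat (Suc j) :: real) * (y / fact (Suc j)) = y / fact j"
proof -
  have e: "(fact (Suc j)::real) = of_nat (Suc j) * fact j" by (simp only: fact_Suc of_nat_mult mult.commute)
  show ?thesis unfolding e by (rule div_cancel_aux) simp
qed

lemma lag_ode: "[:0,1:] * pderiv (pderiv (lag f b)) + [:of_int b + 1, -1:] * pderiv (lag f b) + of_nat f * lag f b = 0"
proof (rule poly_eqI)
  fix j
  define N where "N = (of_int (int f + b) :: real)"
  define cc where "cc = (\<lambda>j. coeff (lag f b) j)"
  have cc: "cc j = (if j \<le> f then (-1)^j / fact j * (N gchoose (f - j)) else 0)" for j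
    unfolding cc_def N_def coeff_lag ..
  have lhs: "coeff ([:0,1:] * pderiv (pderiv (lag f b)) + [:of_int b + 1, -1:] * pderiv (lag f b) + of_nat f * lag f b) j
     = of_nat (Suc j) * (of_nat j + of_int b + 1) * cc (Suc j) + (of_nat f - of_nat j) * cc j"
    by (cases j) (simp_all add: cc_def coeff_pderiv of_nat_poly algebra_simps)
  have "of_nat (Suc j) * (of_nat j + of_int b + 1) * cc (Suc j) + (of_nat f - of_nat j) * cc j = 0"
  proof (cases "j < f")
    case True
    define t where "t = f - Suc j"
    have ft: "f - j = Suc t" using True unfolding t_def by simp
    have Nt: "N - of_nat t = of_nat j + of_int b + 1" unfolding N_def t_def using True by (simp add: of_nat_diff)
    have fj: "(of_nat f - of_nat j :: real) = of_nat (Suc t)" using True unfolding t_def by (simp add: of_nat_diff)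
    have e1: "cc (Suc j) = (-1)^Suc j / fact (Suc j) * (N gchoose t)" using True unfolding cc t_def by simp
    have e2: "cc j = (-1)^j / fact j * (N gchoose Suc t)" using True unfolding cc ft by simp
    have "(of_nat f - of_nat j) * cc j = (-1)^j / fact j * ((N - of_nat t) * (N gchoose t))"
      unfolding e2 fj gch_step[symmetric] by simp
    moreover have eS: "of_nat (Suc j) * cc (Suc j) = - ((-1)^j / fact j * (N gchoose t))"
    proof -
      have "of_nat (Suc j) * cc (Suc j) = of_nat (Suc j) * (((-1)^Suc j * (N gchoose t)) / fact (Suc j))"
        unfolding e1 by simp
      also have "\<dots> = ((-1)^Suc j * (N gchoose t)) / fact j" by (rule fact_div)
      finally show ?thesis by simp
    qed
    have A: "of_nat (Suc j) * (of_nat j + of_int b + 1) * cc (Suc j) = (of_nat j + of_int b + 1) * (of_nat (Suc j) * cc (Suc j))"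
      by (simp only: mult_ac)
    have "of_nat (Suc j) * (of_nat j + of_int b + 1) * cc (Suc j) = - ((-1)^j / fact j * ((N - of_nat t) * (N gchoose t)))"
      unfolding A eS Nt by (simp add: algebra_simps add_divide_distrib)
    ultimately show ?thesis by simp
  next
    case False
    thus ?thesis by (simp add: cc)
  qed
  thus "coeff ([:0,1:] * pderiv (pderiv (lag f b)) + [:of_int b + 1, -1:] * pderiv (lag f b) + of_nat f * lag f b) j = coeff 0 j"
    using lhs by simp
qed

lemma lag_shift: "lag f (b + 1) - lag f b = - pderiv (lag f b)"
proof (rule poly_eqI)
  fix j
  define N where "N = (of_int (int f + b) :: real)"
  have N1: "(of_int (int f + (b + 1)) :: real) = N + 1" unfolding N_def by simp
  show "coeff (lag f (b + 1) - lag f b) j = coeff (- pderiv (lag f b)) j"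
  proof (cases "j < f")
    case True
    define t where "t = f - Suc j"
    have ft: "f - j = Suc t" using True unfolding t_def by simp
    have "coeff (lag f (b + 1) - lag f b) j = (-1)^j / fact j * (((N + 1) gchoose Suc t) - (N gchoose Suc t))"
      using True unfolding coeff_diff coeff_lag N1 ft by (simp add: N_def right_diff_distrib)
    also have "\<dots> = (-1)^j / fact j * (N gchoose t)" by (simp add: gbinomial_Suc_Suc)
    also have "\<dots> = - (of_nat (Suc j) * (((-1)^Suc j * (N gchoose t)) / fact (Suc j)))"
      unfolding fact_div by simp
    also have "\<dots> = coeff (- pderiv (lag f b)) j"
      using True unfolding coeff_minus coeff_pderiv coeff_lag N_def t_def by simp
    finally show ?thesis .
  next
    case False
    thus ?thesis by (cases "j = f") (simp_all add: coeff_lag coeff_pderiv)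
  qed
qed



lemma pc1: "[:u, -1:] = [:u:] - [:0, 1::real:]"
  by (simp add: poly_eq_iff coeff_pCons split: nat.split)
lemma pc2: "[:u, 1:] = [:u:] + [:0, 1::real:]"
  by (simp add: poly_eq_iff coeff_pCons split: nat.split)
lemma pc1': "[:u + 1, -1:] = [:u:] + 1 - [:0, 1::real:]"
  by (simp add: poly_eq_iff coeff_pCons split: nat.split)
lemma pc3: "[:u + v:] = [:u:] + [:v::real:]"
  by simp

lemma rec_ext_X:
  fixes R A :: "nat \<Rightarrow> real poly" and gam lam X :: "real poly"
  assumes D: "\<And>s. pderiv (R s) = R (Suc s) - gam * R s"
    and dg: "pderiv gam = 0" and dl: "pderiv lam = 0" and dX: "pderiv X = 1"
    and dA: "\<And>s. pderiv (A s) = 0" and As: "\<And>s. A (Suc s) = A s + 1"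
    and E0: "lam * R 0 = of_nat 0 * R 0 - (A 0 - X) * R 1 - X * R 2"
  shows "lam * R s = of_nat s * R s - (A s - X) * R (Suc s) - X * R (Suc (Suc s))"
proof (induction s)
  case 0
  thus ?case using E0 by (simp add: numeral_2_eq_2)
next
  case (Suc s)
  have dn: "pderiv (of_nat s :: real poly) = 0" by (simp add: of_nat_poly pderiv_pCons)
  have IH: "lam * R s = of_nat s * R s - (A s - X) * R (Suc s) - X * R (Suc (Suc s))"
    using Suc.IH .
  have p1: "pderiv (lam * R s) = lam * (R (Suc s) - gam * R s)" by (simp add: pderiv_mult dl D)
  have p2: "pderiv (of_nat s * R s) = of_nat s * (R (Suc s) - gam * R s)" by (simp add: pderiv_mult dn D)
  have p3: "pderiv ((A s - X) * R (Suc s)) = (A s - X) * (R (Suc (Suc s)) - gam * R (Suc s)) - R (Suc s)"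
    by (simp add: pderiv_mult pderiv_diff dA dX D)
  have p4: "pderiv (X * R (Suc (Suc s))) = X * (R (Suc (Suc (Suc s))) - gam * R (Suc (Suc s))) + R (Suc (Suc s))"
    by (simp add: pderiv_mult dX D)
  have "pderiv (lam * R s) = pderiv (of_nat s * R s - (A s - X) * R (Suc s) - X * R (Suc (Suc s)))"
    by (simp only: IH)
  hence Q: "lam * (R (Suc s) - gam * R s) = of_nat s * (R (Suc s) - gam * R s)
      - ((A s - X) * (R (Suc (Suc s)) - gam * R (Suc s)) - R (Suc s))
      - (X * (R (Suc (Suc (Suc s))) - gam * R (Suc (Suc s))) + R (Suc (Suc s)))"
    unfolding pderiv_diff p1 p2 p3 p4 .
  have "lam * R (Suc s) = lam * (R (Suc s) - gam * R s) + gam * (lam * R s)" by (simp add: algebra_simps)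
  also have "\<dots> = of_nat s * (R (Suc s) - gam * R s)
      - ((A s - X) * (R (Suc (Suc s)) - gam * R (Suc s)) - R (Suc s))
      - (X * (R (Suc (Suc (Suc s))) - gam * R (Suc (Suc s))) + R (Suc (Suc s)))
      + gam * (of_nat s * R s - (A s - X) * R (Suc s) - X * R (Suc (Suc s)))"
    unfolding Q IH ..
  also have "\<dots> = of_nat (Suc s) * R (Suc s) - (A (Suc s) - X) * R (Suc (Suc s)) - X * R (Suc (Suc (Suc s)))"
    unfolding As by (simp add: algebra_simps)
  finally show ?case .
qed

lemma rec_ext:
  fixes R :: "nat \<Rightarrow> real poly" and gam lam :: "real poly" and al :: real
  assumes D: "\<And>s. pderiv (R s) = R (Suc s) - gam * R s"
    and dg: "pderiv gam = 0" and dl: "pderiv lam = 0"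
    and E0: "lam * R 0 = - ([:al:] + 1 - [:0,1:]) * R 1 - [:0,1:] * R 2"
  shows "lam * R s = of_nat s * R s - ([:al:] + of_nat s + 1 - [:0,1:]) * R (Suc s) - [:0,1:] * R (Suc (Suc s))"
proof -
  have "lam * R s = of_nat s * R s - ((\<lambda>s. [:al:] + of_nat s + 1) s - [:0,1:]) * R (Suc s) - [:0,1:] * R (Suc (Suc s))"
  proof (rule rec_ext_X[where gam=gam])
    show "lam * R 0 = of_nat 0 * R 0 - ([:al:] + of_nat 0 + 1 - [:0,1:]) * R 1 - [:0,1:] * R 2"
    proof -
      have e: "of_nat 0 * R 0 - ([:al:] + of_nat 0 + 1 - [:0,1:]) * R 1 - [:0,1:] * R 2 = - ([:al:] + 1 - [:0,1:]) * R 1 - [:0,1:] * R 2"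
        by (simp only: of_nat_0 mult_zero_left add_0_right diff_0 minus_mult_left)
      show ?thesis using E0 e by (rule trans[OF _ sym])
    qed
  qed (auto simp: D dg dl pderiv_pCons of_nat_poly pderiv_add one_pCons)
  thus ?thesis by simp
qed

lemma row1_D: "pderiv (row1 a f s) = row1 a f (Suc s) - 0 * row1 a f s"
  unfolding row1_def by simp

lemma row1_E: "of_nat f * row1 a f s = of_nat s * row1 a f s - ([:of_int a:] + of_nat s + 1 - [:0,1:]) * row1 a f (Suc s)
   - [:0,1:] * row1 a f (Suc (Suc s))"
proof (rule rec_ext[where gam=0])
  show "pderiv (row1 a f s) = row1 a f (Suc s) - 0 * row1 a f s" for s by (rule row1_D)
  show "pderiv (of_nat f :: real poly) = 0" by (simp add: of_nat_poly pderiv_pCons)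
  have "[:0,1:] * pderiv (pderiv (lag f a)) + ([:of_int a:] + 1 - [:0,1:]) * pderiv (lag f a) + of_nat f * lag f a = 0"
    using lag_ode[of f a] unfolding pc1' .
  thus "of_nat f * row1 a f 0 = - ([:of_int a:] + 1 - [:0,1:]) * row1 a f 1 - [:0,1:] * row1 a f 2"
    unfolding row1_def by (simp add: numeral_2_eq_2 algebra_simps)
qed simp

lemma row2_D: "pderiv (row2 a f s) = row2 a f (Suc s) - 1 * row2 a f s"
proof -
  have sh: "lag f (a + int (Suc s)) = lag f (a + int s) - pderiv (lag f (a + int s))"
    using lag_shift[of f "a + int s"] by (simp add: algebra_simps)
  show ?thesis unfolding row2_def sh
    by (simp add: pderiv_pcompose pcompose_diff pcompose_uminus pderiv_pCons)
qed

lemma row2_E: "(- of_int a - 1 - of_nat f) * row2 a f s = of_nat s * row2 a f s - ([:of_int a:] + of_nat s + 1 - [:0,1:]) * row2 a f (Suc s)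
   - [:0,1:] * row2 a f (Suc (Suc s))"
proof (rule rec_ext[where gam=1])
  show "pderiv (row2 a f s) = row2 a f (Suc s) - 1 * row2 a f s" for s by (rule row2_D)
  show "pderiv (- of_int a - 1 - of_nat f :: real poly) = 0"
    by (simp add: of_nat_poly of_int_poly pderiv_pCons pderiv_diff pderiv_minus)
  define P where "P = lag f a"
  define q where "q = [:0, -1::real:]"
  have sh: "lag f (b + 1) = lag f b - pderiv (lag f b)" for b using lag_shift[of f b] by (simp add: algebra_simps)
  have r0: "row2 a f 0 = pcompose P q" unfolding row2_def P_def q_def by simp
  have r1: "row2 a f 1 = pcompose P q - pcompose (pderiv P) q"
    unfolding row2_def P_def q_def using sh[of a] by (simp add: pcompose_diff)
  have r2: "row2 a f 2 = pcompose P q - pcompose (pderiv P) q - pcompose (pderiv P) q + pcompose (pderiv (pderiv P)) q"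
  proof -
    have "lag f (a + int 2) = lag f (a + 1 + 1)" by (simp add: algebra_simps)
    also have "\<dots> = P - pderiv P - pderiv P + pderiv (pderiv P)"
      unfolding sh P_def by (simp add: pderiv_diff algebra_simps)
    finally have L2: "lag f (a + int 2) = P - pderiv P - pderiv P + pderiv (pderiv P)" .
    show ?thesis unfolding row2_def L2 by (simp only: pcompose_diff pcompose_add q_def)
  qed
  define X where "X = [:0,1::real:]"
  define Ac where "Ac = [:of_int a::real:]"
  define psi where "psi = pcompose P q"
  define psi1 where "psi1 = pcompose (pderiv P) q"
  define psi2 where "psi2 = pcompose (pderiv (pderiv P)) q"
  have ode0: "X * pderiv (pderiv P) + (Ac + 1 - X) * pderiv P + of_nat f * P = 0"
    using lag_ode[of f a] unfolding pc1' P_def X_def Ac_def .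
  have cX: "pcompose X q = - X" unfolding X_def q_def by (simp add: pcompose_pCons)
  have cA: "pcompose Ac q = Ac" unfolding Ac_def by simp
  have c1: "pcompose 1 q = 1" by (rule pcompose_1)
  have cf: "pcompose (of_nat f) q = of_nat f" by (simp add: of_nat_poly)
  have "pcompose (X * pderiv (pderiv P) + (Ac + 1 - X) * pderiv P + of_nat f * P) q = 0"
    unfolding ode0 by simp
  hence ode: "- X * psi2 + (Ac + 1 + X) * psi1 + of_nat f * psi = 0"
    unfolding pcompose_add pcompose_mult pcompose_diff cX cA c1 cf psi_def psi1_def psi2_def
    by (simp add: algebra_simps)
  have la: "(- of_int a - 1 - of_nat f :: real poly) = - Ac - 1 - of_nat f"
    unfolding Ac_def by (simp add: of_int_poly)
  have "- ([:of_int a:] + 1 - [:0,1:]) * row2 a f 1 - [:0,1:] * row2 a f 2 - (- of_int a - 1 - of_nat f) * row2 a f 0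
     = - X * psi2 + (Ac + 1 + X) * psi1 + of_nat f * psi"
    unfolding r0 r1 r2 la X_def[symmetric] Ac_def[symmetric] psi_def[symmetric] psi1_def[symmetric] psi2_def[symmetric]
    by (simp add: algebra_simps)
  thus "(- of_int a - 1 - of_nat f) * row2 a f 0 = - ([:of_int a:] + 1 - [:0,1:]) * row2 a f 1 - [:0,1:] * row2 a f 2"
    unfolding ode by simp
qed simp



lemma pcl: "[:al + of_nat s + 1, -1:] = [:al:] + of_nat s + 1 - [:0, 1::real:]"
  by (simp add: poly_eq_iff coeff_pCons of_nat_poly split: nat.split)

lemma sum_ind01: "(\<Sum>i<k. if i < k1 then 0 else 1 :: real poly) = of_nat (k - k1)"
  by (induction k) (auto simp: Suc_diff_le)

lemma main_poly:
  fixes a :: int and F1 F2 :: "nat set" and m0 :: nat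
  assumes F1: "finite F1" and F2: "finite F2" and k: "card F1 + card F2 = Suc k'"
  defines "l1 \<equiv> sorted_list_of_set F1" and "l2 \<equiv> sorted_list_of_set F2"
  defines "rws \<equiv> map (row1 a) l1 @ map (row2 a) l2"
  defines "k \<equiv> card F1 + card F2"
  defines "L \<equiv> det (mat (k + 1) (k + 1) (\<lambda>(i, j). ((row1 a m0 # rws) ! i) j))"
  defines "Om \<equiv> det (mat k k (\<lambda>(i, j). (rws ! i) j))"
  defines "X \<equiv> [:0,1::real:]"
  shows "X * pderiv (pderiv L) * Om + ([:of_int a:] + of_nat k + 1 - X) * pderiv L * Om - 2 * X * pderiv Om * pderiv L
     + (of_nat m0 - of_nat (card F1)) * L * Om + (X - [:of_int a:] - of_nat k) * pderiv Om * L + X * pderiv (pderiv Om) * L = 0"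
proof -
  define k1 where "k1 = card F1"
  have len1: "length l1 = k1" unfolding l1_def k1_def by simp
  have len2: "length l2 = card F2" unfolding l2_def by simp
  define R where "R = (\<lambda>i. (row1 a m0 # rws) ! i)"
  define c where "c = (\<lambda>i. if i = 0 then 0 else if i - 1 < k1 then 0 else 1 :: real poly)"
  define lam where "lam = (\<lambda>i. if i = 0 then of_nat m0 else if i - 1 < k1 then of_nat (l1 ! (i - 1))
       else - of_int a - 1 - of_nat (l2 ! (i - 1 - k1)) :: real poly)"
  have Rrow: "R (Suc i) = (if i < k1 then row1 a (l1 ! i) else row2 a (l2 ! (i - k1)))" if "i < k" for i
    using that unfolding R_def rws_def k_def by (auto simp: nth_append len1 len2 k1_def)
  have lr: "lrows R c lam (of_int a) (Suc k)"
  proof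
    fix i s assume i: "i < Suc k"
    show "pderiv (R i s) = R i (Suc s) - c i * R i s"
    proof (cases i)
      case 0 thus ?thesis unfolding R_def c_def using row1_D by simp
    next
      case (Suc i')
      hence i': "i' < k" using i by simp
      show ?thesis using Rrow[OF i'] unfolding Suc c_def using row1_D row2_D by auto
    qed
    show "lam i * R i s = of_nat s * R i s - [:of_int a + of_nat s + 1, -1:] * R i (Suc s) - [:0, 1:] * R i (Suc (Suc s))"
      unfolding pcl
    proof (cases i)
      case 0 thus "lam i * R i s = of_nat s * R i s - ([:of_int a:] + of_nat s + 1 - [:0, 1:]) * R i (Suc s) - [:0, 1:] * R i (Suc (Suc s))"
        unfolding R_def lam_def using row1_E by simp
    next
      case (Suc i')
      hence i': "i' < k" using i by simp
      show "lam i * R i s = of_nat s * R i s - ([:of_int a:] + of_nat s + 1 - [:0, 1:]) * R i (Suc s) - [:0, 1:] * R i (Suc (Suc s))"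
        using Rrow[OF i'] unfolding Suc lam_def using row1_E row2_E by auto
    qed
  qed
  have c0: "c 0 = 0" unfolding c_def by simp
  have cd: "pderiv (c i) = 0" for i unfolding c_def by simp
  have cs: "(\<Sum>i<Suc k. c i) = of_nat (card F2)"
  proof -
    have "(\<Sum>i<Suc k. c i) = c 0 + (\<Sum>i<k. c (Suc i))" by (rule sum.lessThan_Suc_shift)
    also have "\<dots> = (\<Sum>i<k. if i < k1 then 0 else 1)" unfolding c_def by simp
    also have "\<dots> = of_nat (card F2)" unfolding sum_ind01 k_def k1_def by simp
    finally show ?thesis .
  qed
  interpret M: lrows R c lam "of_int a" "Suc k" by (rule lr)
  interpret B: lrows "\<lambda>i. R (Suc i)" "\<lambda>i. c (Suc i)" "\<lambda>i. lam (Suc i)" "of_int a" k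
    by unfold_locales (rule M.hD M.hE; simp)+
  have LL: "L = lrows.DC R (Suc k) id" unfolding L_def M.DC_def Dt_def unfolding R_def
    by (rule arg_cong[where f=det]) (auto intro!: eq_matI)
  have OO: "Om = lrows.DC (\<lambda>i. R (Suc i)) k id" unfolding Om_def B.DC_def Dt_def unfolding R_def
    by (rule arg_cong[where f=det]) (auto intro!: eq_matI)
  have kk: "k = Suc k'" using k unfolding k_def .
  have "[:0,1:] * pderiv (pderiv L) * Om + ([:of_int a:] + of_nat k + 1 - [:0,1:]) * pderiv L * Om - 2 * [:0,1:] * pderiv Om * pderiv L
     + (lam 0 - of_nat k + (\<Sum>i<Suc k. c i)) * L * Om + ([:0,1:] - [:of_int a:] - of_nat k) * pderiv Om * L + [:0,1:] * pderiv (pderiv Om) * L = 0"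
    unfolding LL OO by (rule core[OF lr kk c0 cd])
  moreover have "lam 0 - of_nat k + (\<Sum>i<Suc k. c i) = of_nat m0 - of_nat (card F1)"
    unfolding cs unfolding lam_def k_def by simp
  ultimately show ?thesis unfolding X_def by simp
qed



theorem mainTheorem12:
  fixes a :: int and F1 F2 :: "nat set" and n :: nat and x :: real
  assumes "a < 0"
    and "finite F1" and "finite F2" and "0 \<notin> F1" and "0 \<notin> F2"
    and "int n \<in> sigmaF F1 F2"
    and "poly (OmegaF a F1 F2) x \<noteq> 0"
  shows "(let k1 = card F1; k = card F1 + card F2;
              \<Omega> = OmegaF a F1 F2; L = LagF a F1 F2 n;
              r1 = poly (pderiv \<Omega>) x / poly \<Omega> x;
              r2 = poly (pderiv (pderiv \<Omega>)) x / poly \<Omega> x;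
              h1 = of_int a + real k + 1 - x - 2 * x * r1;
              h0 = - real k1 - of_int (uF F1 F2) + (x - of_int a - real k) * r1 + x * r2
          in x * poly (pderiv (pderiv L)) x + h1 * poly (pderiv L) x + h0 * poly L x
             = - real n * poly L x)"
proof -
  note F1 = assms(2) and F2 = assms(3) and sig = assms(6) and Onz = assms(7)
  define u where "u = uF F1 F2"
  have un: "u \<le> int n" using sig unfolding sigmaF_def u_def by auto
  define m0 where "m0 = nat (int n - u)"
  have m0r: "real m0 = real n - of_int u" unfolding m0_def using un by simp
  define k where "k = card F1 + card F2"
  define l1 where "l1 = sorted_list_of_set F1"
  define l2 where "l2 = sorted_list_of_set F2"
  define rws where "rws = map (row1 a) l1 @ map (row2 a) l2"
  have LF: "LagF a F1 F2 n = det (mat (k + 1) (k + 1) (\<lambda>(i, j). ((row1 a m0 # rws) ! i) j))"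
    unfolding LagF_def Let_def m0_def u_def k_def rws_def l1_def l2_def ..
  have OF: "OmegaF a F1 F2 = det (mat k k (\<lambda>(i, j). (rws ! i) j))"
    unfolding OmegaF_def Let_def k_def rws_def l1_def l2_def ..
  define L where "L = LagF a F1 F2 n"
  define Om where "Om = OmegaF a F1 F2"
  define Ox where "Ox = poly Om x"
  have Ox: "Ox \<noteq> 0" using Onz unfolding Ox_def Om_def .
  define L0 where "L0 = poly L x"
  define L1 where "L1 = poly (pderiv L) x"
  define L2 where "L2 = poly (pderiv (pderiv L)) x"
  define O1 where "O1 = poly (pderiv Om) x"
  define O2 where "O2 = poly (pderiv (pderiv Om)) x"
  have core: "x * L2 * Ox + (of_int a + real k + 1 - x) * L1 * Ox - 2 * x * O1 * L1
     + (real m0 - real (card F1)) * L0 * Ox + (x - of_int a - real k) * O1 * L0 + x * O2 * L0 = 0"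
  proof (cases k)
    case 0
    hence e1: "F1 = {}" and e2: "F2 = {}" using F1 F2 unfolding k_def by auto
    have O1': "Om = 1" unfolding Om_def OF using 0 by simp
    have u0: "u = 0" unfolding u_def uF_def e1 e2 by simp
    have L': "L = lag n a" unfolding L_def LF using 0 u0 unfolding m0_def rws_def l1_def l2_def e1 e2 row1_def
      by (simp add: det_single)
    have "poly ([:0,1:] * pderiv (pderiv (lag n a)) + [:of_int a + 1, -1:] * pderiv (lag n a) + of_nat n * lag n a) x = 0"
      using lag_ode[of n a] by simp
    hence "x * L2 + (of_int a + 1 - x) * L1 + real n * L0 = 0"
      unfolding L2_def L1_def L0_def L' by (simp add: algebra_simps of_nat_poly)
    moreover have "Ox = 1" "O1 = 0" "O2 = 0" unfolding Ox_def O1_def O2_def O1' by simp_all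
    moreover have "real m0 = real n" using m0r u0 by simp
    ultimately show ?thesis using 0 e1 by (simp add: algebra_simps)
  next
    case (Suc k')
    have "[:0,1:] * pderiv (pderiv L) * Om + ([:of_int a:] + of_nat k + 1 - [:0,1:]) * pderiv L * Om - 2 * [:0,1:] * pderiv Om * pderiv L
     + (of_nat m0 - of_nat (card F1)) * L * Om + ([:0,1:] - [:of_int a:] - of_nat k) * pderiv Om * L + [:0,1:] * pderiv (pderiv Om) * L = 0"
      unfolding L_def Om_def LF OF k_def rws_def l1_def l2_def
      by (rule main_poly[OF F1 F2 Suc[unfolded k_def]])
    hence "poly ([:0,1:] * pderiv (pderiv L) * Om + ([:of_int a:] + of_nat k + 1 - [:0,1:]) * pderiv L * Om - 2 * [:0,1:] * pderiv Om * pderiv L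
     + (of_nat m0 - of_nat (card F1)) * L * Om + ([:0,1:] - [:of_int a:] - of_nat k) * pderiv Om * L + [:0,1:] * pderiv (pderiv Om) * L) x = 0"
      by simp
    thus ?thesis unfolding L0_def L1_def L2_def O1_def O2_def Ox_def by (simp add: of_nat_poly algebra_simps)
  qed
  have "Ox * (x * L2 + (of_int a + real k + 1 - x - 2 * x * (O1 / Ox)) * L1
      + (- real (card F1) - of_int u + (x - of_int a - real k) * (O1 / Ox) + x * (O2 / Ox)) * L0 + real n * L0)
      = x * L2 * Ox + (of_int a + real k + 1 - x) * L1 * Ox - 2 * x * O1 * L1
     + (real m0 - real (card F1)) * L0 * Ox + (x - of_int a - real k) * O1 * L0 + x * O2 * L0"
    using Ox unfolding m0r by (simp add: field_simps)
  hence "Ox * (x * L2 + (of_int a + real k + 1 - x - 2 * x * (O1 / Ox)) * L1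
      + (- real (card F1) - of_int u + (x - of_int a - real k) * (O1 / Ox) + x * (O2 / Ox)) * L0 + real n * L0) = 0"
    using core by simp
  hence "x * L2 + (of_int a + real k + 1 - x - 2 * x * (O1 / Ox)) * L1
      + (- real (card F1) - of_int u + (x - of_int a - real k) * (O1 / Ox) + x * (O2 / Ox)) * L0 + real n * L0 = 0"
    using Ox by simp
  hence "x * L2 + (of_int a + real k + 1 - x - 2 * x * (O1 / Ox)) * L1
      + (- real (card F1) - of_int u + (x - of_int a - real k) * (O1 / Ox) + x * (O2 / Ox)) * L0 = - real n * L0"
    by linarith
  thus ?thesis unfolding Let_def L0_def L1_def L2_def O1_def O2_def Ox_def L_def Om_def u_def k_def .
qed


end
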